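(* Let $n\ge 3$, let $1\le i<j\le n$, and let $K$ be the $(i,j)$-coordinate coloring of $H_2(n,n-1)$, i.e. $K(x)=(x_i,x_j)\in\mathbb{Z}_2^2$. Then the set of transition edges of $K$ is exactly $\{(x,y): x+y\in\{f_i,f_j\}\}$, and $\mathrm{rb}(K)=\frac{2}{n+1}$. As a consequence, the maximum of $\mathrm{rb}(K')$ over all proper $4$-colorings $K'$ of $H_2(n,n-1)$ equals $\frac{2}{n+1}$.
   Context: $H_2(n,n-1)$ is the simple undirected graph with vertex set $\mathbb{Z}_2^n$ in which $x,y$ are adjacent iff their Hamming distance $|\{i:x_i\ne y_i\}|$ is at least $n-1$. $e_k$ denotes the $k$-th standard basis vector of $\mathbb{Z}_2^n$, $\mathbb{1}$ the all-ones vector, and $f_k=e_k+\mathbb{1}$. For a simple graph $G=(V,E)$ and a proper $k$-coloring $K$, an edge $(x,y)\in E$ is a transition edge for $K$ if swapping the colors of $x$ and $y$ (all other colors unchanged) yields again a proper $k$-coloring; $T(K)$ is the set of transition edges and $\mathrm{rb}(K)=|T(K)|/|E|$ is the robustness. *)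

theory Defs
  imports Complex_Main
begin

text \<open>A simple graph is given by a vertex set V and a symmetric irreflexive
adjacency relation adj; its edges are the unordered pairs {x,y}.\<close>

definition edges :: "'a set \<Rightarrow> ('a \<Rightarrow> 'a \<Rightarrow> bool) \<Rightarrow> 'a set set" where
  "edges V adj = {{x, y} | x y. x \<in> V \<and> y \<in> V \<and> adj x y}"

definition proper_coloring ::
  "'a set \<Rightarrow> ('a \<Rightarrow> 'a \<Rightarrow> bool) \<Rightarrow> 'c set \<Rightarrow> ('a \<Rightarrow> 'c) \<Rightarrow> bool" where
  "proper_coloring V adj C K \<longleftrightarrow>
     (\<forall>x\<in>V. K x \<in> C) \<and> (\<forall>x\<in>V. \<forall>y\<in>V. adj x y \<longrightarrow> K x \<noteq> K y)"

definition swap_colors :: "('a \<Rightarrow> 'c) \<Rightarrow> 'a \<Rightarrow> 'a \<Rightarrow> ('a \<Rightarrow> 'c)" where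
  "swap_colors K x y = K(x := K y, y := K x)"

definition transition_edges ::
  "'a set \<Rightarrow> ('a \<Rightarrow> 'a \<Rightarrow> bool) \<Rightarrow> 'c set \<Rightarrow> ('a \<Rightarrow> 'c) \<Rightarrow> 'a set set" where
  "transition_edges V adj C K =
     {{x, y} | x y. x \<in> V \<and> y \<in> V \<and> adj x y \<and>
                    proper_coloring V adj C (swap_colors K x y)}"

definition robustness ::
  "'a set \<Rightarrow> ('a \<Rightarrow> 'a \<Rightarrow> bool) \<Rightarrow> 'c set \<Rightarrow> ('a \<Rightarrow> 'c) \<Rightarrow> real" where
  "robustness V adj C K =
     real (card (transition_edges V adj C K)) / real (card (edges V adj))"

text \<open>Z_2^n is represented by the power set of the coordinate set {1..n}:
a vector x corresponds to its support {k. x_k = 1}.  Vector addition is the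
symmetric difference, the Hamming distance is the size of the symmetric
difference, e_k = {k}, the all-ones vector is {1..n}, f_k = {1..n} - {k}.\<close>

definition Z2n :: "nat \<Rightarrow> nat set set" where
  "Z2n n = Pow {1..n}"

definition vadd :: "nat set \<Rightarrow> nat set \<Rightarrow> nat set" where
  "vadd x y = (x - y) \<union> (y - x)"

definition hamming :: "nat set \<Rightarrow> nat set \<Rightarrow> nat" where
  "hamming x y = card (vadd x y)"

definition ones :: "nat \<Rightarrow> nat set" where
  "ones n = {1..n}"

definition ebasis :: "nat \<Rightarrow> nat set" where
  "ebasis k = {k}"

definition fvec :: "nat \<Rightarrow> nat \<Rightarrow> nat set" where
  "fvec n k = vadd (ebasis k) (ones n)"

definition H2_adj :: "nat \<Rightarrow> nat set \<Rightarrow> nat set \<Rightarrow> bool" where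
  "H2_adj n x y \<longleftrightarrow> hamming x y \<ge> n - 1"

definition coord_coloring :: "nat \<Rightarrow> nat \<Rightarrow> nat set \<Rightarrow> bool \<times> bool" where
  "coord_coloring i j x = (i \<in> x, j \<in> x)"

end

theory Submission
  imports Defs
begin


lemma deg_edges:
  assumes sym: "\<And>x y. adj x y \<Longrightarrow> adj y x" and irr: "\<And>x. \<not> adj x x" and xV: "x \<in> V"
  shows "card {e \<in> edges V adj. x \<in> e} = card {y \<in> V. adj x y}"
proof -
  have "bij_betw (\<lambda>y. {x, y}) {y \<in> V. adj x y} {e \<in> edges V adj. x \<in> e}"
  proof (rule bij_betwI')
    fix y z assume "y \<in> {y \<in> V. adj x y}" "z \<in> {y \<in> V. adj x y}"
    then show "({x, y} = {x, z}) = (y = z)" using irr by (auto simp: doubleton_eq_iff)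
  next
    fix y assume "y \<in> {y \<in> V. adj x y}"
    then show "{x, y} \<in> {e \<in> edges V adj. x \<in> e}" using xV by (auto simp: edges_def)
  next
    fix e assume "e \<in> {e \<in> edges V adj. x \<in> e}"
    then obtain a b where e: "e = {a,b}" "a \<in> V" "b \<in> V" "adj a b" "x \<in> e"
      by (auto simp: edges_def)
    show "\<exists>y\<in>{y \<in> V. adj x y}. e = {x, y}"
    proof (cases "x = a")
      case True then show ?thesis using e by auto
    next
      case False then have "x = b" using e by auto
      then show ?thesis using e sym by (intro bexI[of _ a]) auto
    qed
  qed
  then show ?thesis by (simp add: bij_betw_same_card)
qed

lemma handshake:
  assumes fin: "finite V" and sym: "\<And>x y. adj x y \<Longrightarrow> adj y x" and irr: "\<And>x. \<not> adj x x"
  shows "(\<Sum>x\<in>V. card {y \<in> V. adj x y}) = 2 * card (edges V adj)"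
proof -
  let ?E = "edges V adj"
  have finE: "finite ?E"
    by (rule finite_subset[of _ "Pow V"]) (use fin in \<open>auto simp: edges_def\<close>)
  have c2: "card (V \<inter> e) = 2" if "e \<in> ?E" for e
    using that irr by (auto simp: edges_def card_insert_if)
  have "(\<Sum>x\<in>V. card {y \<in> V. adj x y}) = (\<Sum>x\<in>V. card {e \<in> ?E. x \<in> e})"
    proof (rule sum.cong[OF refl])
    fix x assume "x \<in> V"
    show "card {y \<in> V. adj x y} = card {e \<in> ?E. x \<in> e}"
      using deg_edges[of adj x V] sym irr \<open>x \<in> V\<close> by metis
  qed
  also have "\<dots> = (\<Sum>x\<in>V. \<Sum>e\<in>?E. of_bool (x \<in> e))"
    using finE by (intro sum.cong) (auto simp: Int_def)
  also have "\<dots> = (\<Sum>e\<in>?E. \<Sum>x\<in>V. of_bool (x \<in> e))"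
    by (rule sum.swap)
  also have "\<dots> = (\<Sum>e\<in>?E. 2)"
    using fin c2 by (intro sum.cong) (auto simp: Int_def)
  finally show ?thesis by simp
qed



lemma vadd_mem: "a \<in> vadd x y \<longleftrightarrow> (a \<in> x \<longleftrightarrow> a \<notin> y)" by (auto simp: vadd_def)
lemma vadd_comm: "vadd x y = vadd y x" by (auto simp: vadd_def)
lemma vadd_inv: "vadd x (vadd x y) = y" by (auto simp: vadd_def)
lemma vadd_self: "vadd x x = {}" by (auto simp: vadd_def)
lemma vadd_eq_iff: "vadd x y = z \<longleftrightarrow> y = vadd x z" by (auto simp: vadd_def)
lemma vadd_V: "x \<in> Z2n n \<Longrightarrow> y \<in> Z2n n \<Longrightarrow> vadd x y \<in> Z2n n"
  by (auto simp: vadd_def Z2n_def)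

lemma fvec_eq: "k \<in> {1..n} \<Longrightarrow> fvec n k = {1..n} - {k}"
  by (auto simp: fvec_def vadd_def ebasis_def ones_def)

lemma fvec_mem: "a \<in> fvec n k \<longleftrightarrow> (a = k \<longleftrightarrow> a \<notin> {1..n})"
  by (auto simp: fvec_def vadd_def ebasis_def ones_def)

lemma card_fvec: "k \<in> {1..n} \<Longrightarrow> card (fvec n k) = n - 1"
  by (simp add: fvec_eq)

lemma fvec_V: "k \<in> {1..n} \<Longrightarrow> fvec n k \<in> Z2n n"
  by (auto simp: fvec_eq Z2n_def)

lemma L: assumes "z \<subseteq> {1..n}" "n - 1 \<le> card z" "k \<in> {1..n}" "k \<notin> z"
  shows "z = fvec n k"
proof -
  have "z \<subseteq> {1..n} - {k}" using assms by auto
  moreover have "card ({1..n} - {k}) \<le> card z" using assms by simp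
  ultimately show ?thesis using assms(3) by (simp add: fvec_eq card_seteq)
qed

lemma adj_iff: "H2_adj n x y \<longleftrightarrow> n - 1 \<le> card (vadd x y)"
  by (simp add: H2_adj_def hamming_def)

lemma adj_sym: "H2_adj n x y \<Longrightarrow> H2_adj n y x" by (simp add: adj_iff vadd_comm)
lemma adj_irr: "n \<ge> 3 \<Longrightarrow> \<not> H2_adj n x x" by (simp add: adj_iff vadd_self)

lemma nbhd_card:
  assumes "n \<ge> 3" "x \<in> Z2n n"
  shows "card {y \<in> Z2n n. H2_adj n x y} = n + 1"
proof -
  let ?S = "{z \<in> Z2n n. n - 1 \<le> card z}"
  have "bij_betw (vadd x) {y \<in> Z2n n. H2_adj n x y} ?S"
    by (rule bij_betw_byWitness[where f'="vadd x"]) (use assms in \<open>auto simp: vadd_V vadd_inv adj_iff\<close>)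
  then have "card {y \<in> Z2n n. H2_adj n x y} = card ?S" by (simp add: bij_betw_same_card)
  also have "?S = insert {1..n} ((\<lambda>k. fvec n k) ` {1..n})"
  proof (rule set_eqI, rule iffI)
    fix z assume z: "z \<in> ?S"
    show "z \<in> insert {1..n} ((\<lambda>k. fvec n k) ` {1..n})"
    proof (cases "z = {1..n}")
      case False
      have "z \<subseteq> {1..n}" using z by (auto simp: Z2n_def)
      with False obtain k where "k \<in> {1..n}" "k \<notin> z" by blast
      then show ?thesis using L[of z n k] z by (auto simp: Z2n_def)
    qed simp
  next
    fix z assume "z \<in> insert {1..n} ((\<lambda>k. fvec n k) ` {1..n})"
    then show "z \<in> ?S"
    proof
      assume "z = {1..n}" then show ?thesis by (simp add: Z2n_def)
    next
      assume "z \<in> (\<lambda>k. fvec n k) ` {1..n}"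
      then obtain k where "k \<in> {1..n}" "z = fvec n k" by blast
      then show ?thesis using fvec_V[of k n] card_fvec[of k n] by simp
    qed
  qed
  also have "card \<dots> = n + 1"
  proof -
    have inj: "inj_on (\<lambda>k. fvec n k) {1..n}"
    proof (rule inj_onI, rule ccontr)
      fix a b assume "a \<in> {1..n}" "b \<in> {1..n}" "fvec n a = fvec n b" "a \<noteq> b"
      then show False using fvec_mem[of a n a] fvec_mem[of a n b] by blast
    qed
    have "{1..n} \<notin> (\<lambda>k. fvec n k) ` {1..n}"
    proof
      assume "{1..n} \<in> (\<lambda>k. fvec n k) ` {1..n}"
      then obtain k where "k \<in> {1..n}" "{1..n} = fvec n k" by blast
      then show False using fvec_mem[of k n k] by blast
    qed
    then show ?thesis using inj by (simp add: card_image)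
  qed
  finally show ?thesis .
qed

lemma card_Z2n: "card (Z2n n) = 2 ^ n" by (simp add: Z2n_def card_Pow)
lemma fin_Z2n: "finite (Z2n n)" by (simp add: Z2n_def)

lemma card_edges:
  assumes "n \<ge> 3"
  shows "2 * card (edges (Z2n n) (H2_adj n)) = (n + 1) * 2 ^ n"
proof -
  have "2 * card (edges (Z2n n) (H2_adj n)) = (\<Sum>x\<in>Z2n n. card {y \<in> Z2n n. H2_adj n x y})"
    using handshake[of "Z2n n" "H2_adj n"] fin_Z2n adj_sym adj_irr[OF assms] by metis
  also have "\<dots> = (\<Sum>x\<in>Z2n n. n + 1)" using nbhd_card[OF assms] by simp
  finally show ?thesis by (simp add: card_Z2n)
qed



definition tadj where
  "tadj V adj C K x y \<longleftrightarrow> adj x y \<and> proper_coloring V adj C (swap_colors K x y)"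

lemma trans_eq: "transition_edges V adj C K = edges V (tadj V adj C K)"
  by (simp add: transition_edges_def edges_def tadj_def)

lemma swap_comm: "x \<noteq> y \<Longrightarrow> swap_colors K x y = swap_colors K y x"
  by (auto simp: swap_colors_def fun_eq_iff)

lemma tadj_sym:
  assumes sym: "\<And>x y. adj x y \<Longrightarrow> adj y x" and irr: "\<And>x. \<not> adj x x"
  shows "tadj V adj C K x y \<Longrightarrow> tadj V adj C K y x"
  using irr sym by (metis tadj_def swap_comm)

lemma tadj_irr: "(\<And>x. \<not> adj x x) \<Longrightarrow> \<not> tadj V adj C K x x"
  by (simp add: tadj_def)

lemma swap_proper:
  assumes P: "proper_coloring V adj C K" and xV: "x \<in> V" and yV: "y \<in> V" and "K x \<noteq> K y"
    and sym: "\<And>u v. adj u v \<Longrightarrow> adj v u" and irr: "\<And>u. \<not> adj u u"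
    and A: "\<And>v. v \<in> V \<Longrightarrow> adj x v \<Longrightarrow> v \<noteq> y \<Longrightarrow> K v \<noteq> K y"
    and B: "\<And>v. v \<in> V \<Longrightarrow> adj y v \<Longrightarrow> v \<noteq> x \<Longrightarrow> K v \<noteq> K x"
  shows "proper_coloring V adj C (swap_colors K x y)"
  unfolding proper_coloring_def
proof (intro conjI ballI impI)
  fix u assume "u \<in> V" then show "swap_colors K x y u \<in> C"
    using P xV yV by (auto simp: proper_coloring_def swap_colors_def)
next
  fix u v assume uv: "u \<in> V" "v \<in> V" "adj u v"
  have Kp: "K u \<noteq> K v" using P uv by (auto simp: proper_coloring_def)
  have "u \<noteq> v" using uv irr by auto
  show "swap_colors K x y u \<noteq> swap_colors K x y v"
    using A[of v] A[of u] B[of u] B[of v] sym[OF uv(3)] uv Kp \<open>u \<noteq> v\<close> \<open>K x \<noteq> K y\<close>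
    by (auto simp: swap_colors_def)
qed

lemma tdeg_le2:
  fixes K :: "'a \<Rightarrow> nat"
  assumes P: "proper_coloring V adj {..<4} K" and xV: "x \<in> V" and fin: "finite V"
    and sym: "\<And>u v. adj u v \<Longrightarrow> adj v u" and irr: "\<And>u. \<not> adj u u"
    and big: "card {y \<in> V. adj x y} \<ge> 4"
  shows "card {y \<in> V. tadj V adj {..<4} K x y} \<le> 2"
proof (rule ccontr)
  assume c: "\<not> ?thesis"
  let ?N = "{y \<in> V. adj x y}" and ?N' = "{y \<in> V. tadj V adj {..<4} K x y}"
  have F: "w = y" if "y \<in> ?N'" "w \<in> ?N" "K w = K y" for w y
  proof (rule ccontr)
    assume "w \<noteq> y"
    have "w \<noteq> x" using that irr by auto
    have "y \<noteq> x" using that irr by (auto simp: tadj_def)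
    from that have "proper_coloring V adj {..<4} (swap_colors K x y)" by (simp add: tadj_def)
    then have "swap_colors K x y x \<noteq> swap_colors K x y w" using that xV
      by (auto simp: proper_coloring_def)
    then show False using \<open>w \<noteq> y\<close> \<open>w \<noteq> x\<close> \<open>y \<noteq> x\<close> that by (auto simp: swap_colors_def)
  qed
  have sub: "?N' \<subseteq> ?N" by (auto simp: tadj_def)
  have inj: "inj_on K ?N'" using F sub by (intro inj_onI) blast
  have finN: "finite ?N" using fin by simp
  have KN: "K ` ?N \<subseteq> {..<4} - {K x}" using P xV by (force simp: proper_coloring_def)
  have c3: "card ({..<4::nat} - {K x}) = 3" using P xV by (auto simp: proper_coloring_def)
  have "card (K ` ?N') = card ?N'" using inj by (simp add: card_image)
  then have "card (K ` ?N') \<ge> 3" using c by simp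
  moreover have "K ` ?N' \<subseteq> {..<4} - {K x}" using KN sub by auto
  ultimately have eq: "K ` ?N' = {..<4} - {K x}" using c3 by (metis card_seteq finite_Diff finite_lessThan)
  have "?N \<subseteq> ?N'"
  proof
    fix w assume w: "w \<in> ?N"
    then have "K w \<in> K ` ?N'" using KN eq by auto
    then obtain y where "y \<in> ?N'" "K w = K y" by auto
    then show "w \<in> ?N'" using F w by auto
  qed
  then have "card ?N \<le> card ?N'" using fin by (intro card_mono) auto
  also have "\<dots> = 3" using \<open>card (K ` ?N') = card ?N'\<close> eq c3 by simp
  finally show False using big by simp
qed



lemma L2: assumes "d \<in> Z2n n" "H2_adj n x y" "d = vadd x y" "a \<in> {1..n}" "d \<noteq> fvec n a"
  shows "a \<in> d"
  using L[of d n a] assms by (auto simp: Z2n_def adj_iff)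

context
  fixes n i j :: nat
  assumes n3: "n \<ge> 3" and ij: "1 \<le> i" "i < j" "j \<le> n"
begin

lemma coord_proper: "proper_coloring (Z2n n) (H2_adj n) UNIV (coord_coloring i j)"
  unfolding proper_coloring_def
proof (intro conjI ballI impI)
  fix u v assume uv: "u \<in> Z2n n" "v \<in> Z2n n" "H2_adj n u v"
  have d: "vadd u v \<in> Z2n n" using uv by (simp add: vadd_V)
  show "coord_coloring i j u \<noteq> coord_coloring i j v"
  proof (cases "vadd u v = fvec n i")
    case True
    then have "j \<in> vadd u v" using ij fvec_mem[of j n i] by auto
    then show ?thesis by (auto simp: coord_coloring_def vadd_mem)
  next
    case False
    then have "i \<in> vadd u v" using L2[OF d uv(3) refl, of i] ij by auto
    then show ?thesis by (auto simp: coord_coloring_def vadd_mem)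
  qed
qed simp

lemma coord_tadj_back:
  assumes xV: "x \<in> Z2n n" and yV: "y \<in> Z2n n" and a: "a \<in> {i, j}" and xy: "vadd x y = fvec n a"
  shows "tadj (Z2n n) (H2_adj n) UNIV (coord_coloring i j) x y"
proof -
  let ?K = "coord_coloring i j"
  have arange: "a \<in> {1..n}" using a ij by auto
  have adj: "H2_adj n x y" using xy card_fvec[OF arange] by (simp add: adj_iff)
  have ay: "a \<in> y \<longleftrightarrow> a \<in> x" using xy fvec_mem[of a n a] arange vadd_mem[of a x y] by auto
  have diffK: "?K u \<noteq> ?K v" if "a \<in> u \<longleftrightarrow> a \<notin> v" for u v
    using that a by (auto simp: coord_coloring_def)
  have A: "?K v \<noteq> ?K y" if "v \<in> Z2n n" "H2_adj n x v" "v \<noteq> y" for v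
  proof -
    have "vadd x v \<noteq> fvec n a" using that xy vadd_eq_iff by metis
    then have "a \<in> vadd x v" using L2[OF vadd_V[OF xV that(1)] that(2) refl arange] by simp
    then show ?thesis using ay by (intro diffK) (auto simp: vadd_mem)
  qed
  have B: "?K v \<noteq> ?K x" if "v \<in> Z2n n" "H2_adj n y v" "v \<noteq> x" for v
  proof -
    have xy': "vadd y x = fvec n a" using xy vadd_comm by metis
    have "vadd y v \<noteq> fvec n a" using that xy' vadd_eq_iff by metis
    then have "a \<in> vadd y v" using L2[OF vadd_V[OF yV that(1)] that(2) refl arange] by simp
    then show ?thesis using ay by (intro diffK) (auto simp: vadd_mem)
  qed
  have "i \<in> vadd x y \<or> j \<in> vadd x y" using xy a ij fvec_mem[of i n a] fvec_mem[of j n a] by auto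
  then have "?K x \<noteq> ?K y" by (auto simp: coord_coloring_def vadd_mem)
  then have "proper_coloring (Z2n n) (H2_adj n) UNIV (swap_colors ?K x y)"
    using swap_proper[OF coord_proper xV yV _ adj_sym adj_irr[OF n3]] A B by blast
  then show ?thesis using adj by (simp add: tadj_def)
qed

lemma coord_tadj_fwd:
  assumes xV: "x \<in> Z2n n" and yV: "y \<in> Z2n n"
    and t: "tadj (Z2n n) (H2_adj n) UNIV (coord_coloring i j) x y"
  shows "vadd x y \<in> {fvec n i, fvec n j}"
proof (rule ccontr)
  assume c: "vadd x y \<notin> {fvec n i, fvec n j}"
  let ?K = "coord_coloring i j"
  let ?z = "vadd x y"
  have adj: "H2_adj n x y" and pr: "proper_coloring (Z2n n) (H2_adj n) UNIV (swap_colors ?K x y)"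
    using t by (auto simp: tadj_def)
  have zV: "?z \<in> Z2n n" using xV yV by (simp add: vadd_V)
  have iz: "i \<in> ?z" using L2[OF zV adj refl, of i] c ij by auto
  have jz: "j \<in> ?z" using L2[OF zV adj refl, of j] c ij by auto
  obtain z' where z': "z' \<in> Z2n n" "n - 1 \<le> card z'" "i \<in> z'" "j \<in> z'" "z' \<noteq> ?z"
  proof (cases "?z = {1..n}")
    case True
    have "card ({1..n} - {i, j}) \<ge> 1" using n3 ij by (simp add: card_Diff_subset)
    then obtain k where k: "k \<in> {1..n}" "k \<noteq> i" "k \<noteq> j"
      by (metis (no_types, lifting) DiffE One_nat_def card.empty insertCI not_one_le_zero equals0I)
    show ?thesis
    proof (rule that[of "fvec n k"])
      show "fvec n k \<in> Z2n n" using fvec_V[OF k(1)] .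
      show "n - 1 \<le> card (fvec n k)" using card_fvec[OF k(1)] by simp
      show "i \<in> fvec n k" "j \<in> fvec n k" using k ij by (auto simp: fvec_mem)
      show "fvec n k \<noteq> ?z" using True k fvec_mem[of k n k] by auto
    qed
  next
    case False
    show ?thesis
      by (rule that[of "{1..n}"]) (use False ij in \<open>auto simp: Z2n_def\<close>)
  qed
  define w where "w = vadd x z'"
  have wV: "w \<in> Z2n n" using xV z' by (simp add: w_def vadd_V)
  have adjw: "H2_adj n x w" using z' by (simp add: w_def vadd_inv adj_iff)
  have wy: "w \<noteq> y" using z' by (metis w_def vadd_inv)
  have wx: "w \<noteq> x" using adjw adj_irr[OF n3] by auto
  have yx: "y \<noteq> x" using adj adj_irr[OF n3] by auto
  have Kw: "?K w = ?K y" using iz jz z' by (auto simp: w_def coord_coloring_def vadd_mem)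
  have "swap_colors ?K x y x \<noteq> swap_colors ?K x y w"
    using pr xV wV adjw by (auto simp: proper_coloring_def)
  then show False using Kw wy wx yx by (auto simp: swap_colors_def)
qed

end


definition enc :: "bool \<times> bool \<Rightarrow> nat" where
  "enc p = (if fst p then 1 else 0) + (if snd p then 2 else 0)"

lemma enc_inj: "enc p = enc q \<longleftrightarrow> p = q"
  by (cases p; cases q) (auto simp: enc_def)

lemma enc_range: "enc p < 4" by (auto simp: enc_def)

lemma proper_enc:
  "proper_coloring V adj {..<4} (enc \<circ> L) \<longleftrightarrow> proper_coloring V adj UNIV L"
  by (simp add: proper_coloring_def enc_inj enc_range)

lemma swap_enc: "swap_colors (enc \<circ> K) x y = enc \<circ> swap_colors K x y"
  by (auto simp: swap_colors_def fun_eq_iff)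

lemma tadj_enc: "tadj V adj {..<4} (enc \<circ> K) = tadj V adj UNIV K"
  by (auto simp: tadj_def fun_eq_iff swap_enc proper_enc)

theorem proposition4p10:
  fixes n i j :: nat
  assumes "n \<ge> 3" and "1 \<le> i" and "i < j" and "j \<le> n"
  shows "transition_edges (Z2n n) (H2_adj n) (UNIV :: (bool \<times> bool) set) (coord_coloring i j)
           = {{x, y} | x y. x \<in> Z2n n \<and> y \<in> Z2n n \<and>
                            vadd x y \<in> {fvec n i, fvec n j}}
       \<and> robustness (Z2n n) (H2_adj n) (UNIV :: (bool \<times> bool) set) (coord_coloring i j)
           = 2 / (real n + 1)
       \<and> (\<forall>K' :: nat set \<Rightarrow> nat. proper_coloring (Z2n n) (H2_adj n) {..<4} K' \<longrightarrow>
             robustness (Z2n n) (H2_adj n) {..<4} K' \<le> 2 / (real n + 1))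
       \<and> (\<exists>K' :: nat set \<Rightarrow> nat. proper_coloring (Z2n n) (H2_adj n) {..<4} K' \<and>
             robustness (Z2n n) (H2_adj n) {..<4} K' = 2 / (real n + 1))"
proof -
  let ?V = "Z2n n" and ?A = "H2_adj n" and ?K = "coord_coloring i j"
  let ?T = "tadj ?V ?A (UNIV :: (bool \<times> bool) set) ?K"
  have n3: "n \<ge> 3" using assms by simp
  have eqv: "?T x y \<longleftrightarrow> vadd x y \<in> {fvec n i, fvec n j}" if "x \<in> ?V" "y \<in> ?V" for x y
    using coord_tadj_fwd[OF assms that] coord_tadj_back[OF assms that, of i] coord_tadj_back[OF assms that, of j]
    by auto
  have P1: "transition_edges ?V ?A (UNIV :: (bool \<times> bool) set) ?K
           = {{x, y} | x y. x \<in> Z2n n \<and> y \<in> Z2n n \<and> vadd x y \<in> {fvec n i, fvec n j}}"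
    unfolding trans_eq edges_def using eqv by blast
  have E: "2 * card (edges ?V ?A) = (n + 1) * 2 ^ n" by (rule card_edges[OF n3])
  have symT: "\<And>x y. ?T x y \<Longrightarrow> ?T y x" by (rule tadj_sym[OF adj_sym adj_irr[OF n3]])
  have irrT: "\<And>x. \<not> ?T x x" by (rule tadj_irr[OF adj_irr[OF n3]])
  have degT: "card {y \<in> ?V. ?T x y} = 2" if xV: "x \<in> ?V" for x
  proof -
    have ir: "i \<in> {1..n}" "j \<in> {1..n}" using assms by auto
    have "{y \<in> ?V. ?T x y} = {vadd x (fvec n i), vadd x (fvec n j)}"
      using eqv[OF xV] xV fvec_V[OF ir(1)] fvec_V[OF ir(2)] vadd_V vadd_eq_iff
      by (auto simp del: insert_iff) (metis vadd_V)+
    moreover have "vadd x (fvec n i) \<noteq> vadd x (fvec n j)"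
    proof
      assume "vadd x (fvec n i) = vadd x (fvec n j)"
      then have "fvec n i = fvec n j" by (metis vadd_inv)
      then show False using fvec_mem[of i n i] fvec_mem[of i n j] ir assms(3) by auto
    qed
    ultimately show ?thesis by simp
  qed
  have Tc: "2 * card (transition_edges ?V ?A (UNIV :: (bool \<times> bool) set) ?K) = 2 * 2 ^ n"
  proof -
    have "2 * card (transition_edges ?V ?A (UNIV :: (bool \<times> bool) set) ?K) = (\<Sum>x\<in>?V. card {y \<in> ?V. ?T x y})"
      unfolding trans_eq using handshake[of ?V ?T, OF fin_Z2n symT irrT] by simp
    also have "\<dots> = (\<Sum>x\<in>?V. 2)" using degT by simp
    finally show ?thesis by (simp add: card_Z2n)
  qed
  have frac: "(2::real) ^ n / ((real n + 1) * 2 ^ n / 2) = 2 / (real n + 1)"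
  proof -
    have p: "(2::real) ^ n \<noteq> 0" "real n + 1 \<noteq> 0" by auto
    then show ?thesis by (simp add: divide_simps)
  qed
  have rb: "robustness ?V ?A (UNIV :: (bool \<times> bool) set) ?K = 2 / (real n + 1)"
  proof -
    have a: "real (card (transition_edges ?V ?A (UNIV :: (bool \<times> bool) set) ?K)) = 2 ^ n"
      using Tc by simp
    have b: "real (card (edges ?V ?A)) = (real n + 1) * 2 ^ n / 2"
      using arg_cong[OF E, of real] by (simp add: algebra_simps)
    show ?thesis unfolding robustness_def a b by (rule frac)
  qed
  have P3: "robustness ?V ?A {..<4} K' \<le> 2 / (real n + 1)"
    if P: "proper_coloring ?V ?A {..<4} K'" for K' :: "nat set \<Rightarrow> nat"
  proof -
    let ?T' = "tadj ?V ?A {..<4} K'"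
    have symT': "\<And>x y. ?T' x y \<Longrightarrow> ?T' y x" by (rule tadj_sym[OF adj_sym adj_irr[OF n3]])
    have irrT': "\<And>x. \<not> ?T' x x" by (rule tadj_irr[OF adj_irr[OF n3]])
    have "2 * card (transition_edges ?V ?A {..<4} K') = (\<Sum>x\<in>?V. card {y \<in> ?V. ?T' x y})"
      unfolding trans_eq using handshake[of ?V ?T', OF fin_Z2n symT' irrT'] by simp
    also have "\<dots> \<le> (\<Sum>x\<in>?V. 2)"
    proof (rule sum_mono)
      fix x assume xV: "x \<in> ?V"
      have "card {y \<in> ?V. ?A x y} \<ge> 4" using nbhd_card[OF n3 xV] n3 by linarith
      then show "card {y \<in> ?V. ?T' x y} \<le> 2"
        using tdeg_le2[where V="?V" and adj="?A" and K=K' and x=x] P xV fin_Z2n adj_sym adj_irr[OF n3]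
        by blast
    qed
    finally have "card (transition_edges ?V ?A {..<4} K') \<le> 2 ^ n" by (simp add: card_Z2n)
    then have a: "real (card (transition_edges ?V ?A {..<4} K')) \<le> 2 ^ n"
      by (metis of_nat_le_iff of_nat_numeral of_nat_power)
    have b: "real (card (edges ?V ?A)) = (real n + 1) * 2 ^ n / 2"
      using arg_cong[OF E, of real] by (simp add: algebra_simps)
    have "robustness ?V ?A {..<4} K' \<le> 2 ^ n / ((real n + 1) * 2 ^ n / 2)"
      unfolding robustness_def b by (rule divide_right_mono[OF a]) simp
    also have "\<dots> = 2 / (real n + 1)" by (rule frac)
    finally show ?thesis .
  qed
  have P4: "proper_coloring ?V ?A {..<4} (enc \<circ> ?K) \<and>
             robustness ?V ?A {..<4} (enc \<circ> ?K) = 2 / (real n + 1)"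
  proof
    show "proper_coloring ?V ?A {..<4} (enc \<circ> ?K)"
      using coord_proper[OF assms] by (simp add: proper_enc)
    show "robustness ?V ?A {..<4} (enc \<circ> ?K) = 2 / (real n + 1)"
      using rb by (simp add: robustness_def trans_eq tadj_enc)
  qed
  show ?thesis using P1 rb P3 P4 by blast
qed

end
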